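(* $H$ is continuous on $\Gamma$.
   Context: Let $G=(\mathbb{V},E)$ be a finite graph with adjacency $\sim$. Let $a_{ij}=a_{ji}\ge0$ ($>0$ only if $i\sim j$) and $p_{ij}=p_{ji}\in[0,1]$ ($=0$ if $i\not\sim j$), with some $a_{ij}p_{ij}>0$. Fix $h_1\in(0,1]$; $\Delta$ is the set of arrays $x=(x_{ij})$ with $x_{ij}=x_{ji}\ge0$, $x_{ij}=0$ if $i\not\sim j$, $\sum_{i,j}x_{ij}=1$, $\sum_{(i,j):a_{ij}p_{ij}>0}x_{ij}\ge h_1$; $x_i=\sum_jx_{ij}$. $H(x)=\sum_{(i,j):x_{ij}>0}a_{ij}p_{ij}x_{ij}^2/(x_ix_j)$; $F(x)_{ij}=x_{ij}\big(a_{ij}p_{ij}\frac{x_{ij}}{x_ix_j}-H(x)\big)$, with $F_{ij}=0$ if $x_{ij}=0$ and $a_{ij}p_{ij}x_{ij}/(x_ix_j):=0$ if $a_{ij}p_{ij}=0$. $\Gamma=\{x\in\Delta:F(x)=0\}$, with the topology induced from $\mathbb{R}^{\mathbb{V}\times\mathbb{V}}$. *)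

theory Defs
  imports "HOL-Analysis.Analysis"
begin

text \<open>Arrays x = (x_ij) indexed by V x V, V a finite type; represented as
  real^'v^'v (x $ i $ j), which carries the Euclidean topology of R^(V x V).\<close>

definition vsum :: "real^'v::finite^'v \<Rightarrow> 'v \<Rightarrow> real" where
  "vsum x i = (\<Sum>j\<in>UNIV. x $ i $ j)"

definition Delta :: "('v::finite \<Rightarrow> 'v \<Rightarrow> bool) \<Rightarrow> ('v \<Rightarrow> 'v \<Rightarrow> real) \<Rightarrow> ('v \<Rightarrow> 'v \<Rightarrow> real)
    \<Rightarrow> real \<Rightarrow> (real^'v^'v) set" where
  "Delta adj a p h1 = {x. (\<forall>i j. x $ i $ j = x $ j $ i \<and> x $ i $ j \<ge> 0)
     \<and> (\<forall>i j. \<not> adj i j \<longrightarrow> x $ i $ j = 0)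
     \<and> (\<Sum>i\<in>UNIV. \<Sum>j\<in>UNIV. x $ i $ j) = 1
     \<and> (\<Sum>(i,j)\<in>{(i,j). a i j * p i j > 0}. x $ i $ j) \<ge> h1}"

definition Hfun :: "('v::finite \<Rightarrow> 'v \<Rightarrow> real) \<Rightarrow> ('v \<Rightarrow> 'v \<Rightarrow> real) \<Rightarrow> real^'v^'v \<Rightarrow> real" where
  "Hfun a p x = (\<Sum>i\<in>UNIV. \<Sum>j\<in>UNIV.
     if x $ i $ j > 0 \<and> a i j * p i j > 0
     then a i j * p i j * (x $ i $ j)\<^sup>2 / (vsum x i * vsum x j) else 0)"

definition Ffun :: "('v::finite \<Rightarrow> 'v \<Rightarrow> real) \<Rightarrow> ('v \<Rightarrow> 'v \<Rightarrow> real) \<Rightarrow> real^'v^'v \<Rightarrow> 'v \<Rightarrow> 'v \<Rightarrow> real" where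
  "Ffun a p x i j =
     (if x $ i $ j = 0 then 0
      else x $ i $ j * ((if a i j * p i j > 0 then a i j * p i j * x $ i $ j / (vsum x i * vsum x j) else 0)
                        - Hfun a p x))"

definition Gamma :: "('v::finite \<Rightarrow> 'v \<Rightarrow> bool) \<Rightarrow> ('v \<Rightarrow> 'v \<Rightarrow> real) \<Rightarrow> ('v \<Rightarrow> 'v \<Rightarrow> real)
    \<Rightarrow> real \<Rightarrow> (real^'v^'v) set" where
  "Gamma adj a p h1 = {x \<in> Delta adj a p h1. \<forall>i j. Ffun a p x i j = 0}"

end

theory Submission
  imports Defs
begin

lemma vsum_ge: "x \<in> Delta adj a p h1 \<Longrightarrow> x $ i $ j \<le> vsum x i"
proof -
  assume "x \<in> Delta adj a p h1"
  then have "\<forall>k. 0 \<le> x $ i $ k" unfolding Delta_def by blast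
  then show ?thesis unfolding vsum_def
    by (intro member_le_sum[where f="\<lambda>k. x $ i $ k", of j UNIV, simplified]) auto
qed

lemma H_local:
  assumes "y \<in> Gamma adj a p h1" "y $ i $ j > 0" "a i j * p i j > 0"
  shows "Hfun a p y = a i j * p i j * y $ i $ j / (vsum y i * vsum y j)"
proof -
  have "Ffun a p y i j = 0" using assms(1) unfolding Gamma_def by auto
  then show ?thesis using assms(2,3) unfolding Ffun_def by auto
qed

theorem lemma9:
  fixes adj :: "'v::finite \<Rightarrow> 'v \<Rightarrow> bool" and a p :: "'v \<Rightarrow> 'v \<Rightarrow> real" and h1 :: real
  assumes adj_sym: "\<And>i j. adj i j \<longleftrightarrow> adj j i"
    and a_sym: "\<And>i j. a i j = a j i" and a_nonneg: "\<And>i j. a i j \<ge> 0"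
    and a_adj: "\<And>i j. a i j > 0 \<Longrightarrow> adj i j"
    and p_sym: "\<And>i j. p i j = p j i" and p_range: "\<And>i j. 0 \<le> p i j \<and> p i j \<le> 1"
    and p_adj: "\<And>i j. \<not> adj i j \<Longrightarrow> p i j = 0"
    and ap_pos: "\<exists>i j. a i j * p i j > 0"
    and h1: "0 < h1" "h1 \<le> 1"
  shows "continuous_on (Gamma adj a p h1) (Hfun a p)"
proof (clarsimp simp: continuous_on_eq_continuous_within)
  fix x assume xG: "x \<in> Gamma adj a p h1"
  then have xD: "x \<in> Delta adj a p h1" unfolding Gamma_def by auto
  let ?S = "{(i,j). a i j * p i j > 0}"
  have hS: "(\<Sum>(i,j)\<in>?S. x $ i $ j) \<ge> h1" using xD unfolding Delta_def by auto
  have "\<exists>ij\<in>?S. (case ij of (i,j) \<Rightarrow> x $ i $ j) > 0"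
  proof (rule ccontr)
    assume "\<not> ?thesis"
    then have "(\<Sum>(i,j)\<in>?S. x $ i $ j) \<le> (\<Sum>(i,j)\<in>?S. 0)"
      by (intro sum_mono) (force simp: not_less)
    then show False using hS h1 by simp
  qed
  then obtain i j where ij: "x $ i $ j > 0" "a i j * p i j > 0" by auto
  define g where "g y = a i j * p i j * y $ i $ j / (vsum y i * vsum y j)" for y :: "real^'v^'v"
  have sym: "x $ j $ i = x $ i $ j" using xD unfolding Delta_def by auto
  have vi: "vsum x i > 0" using vsum_ge[OF xD, of i j] ij by simp
  have vj: "vsum x j > 0" using vsum_ge[OF xD, of j i] ij sym by simp
  have "isCont g x"
    unfolding g_def vsum_def using vi vj unfolding vsum_def
    by (intro continuous_intros) auto
  then have "(g \<longlongrightarrow> g x) (at x within Gamma adj a p h1)"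
    using continuous_at_imp_continuous_within continuous_within isCont_def by blast
  moreover have "g x = Hfun a p x" using H_local[OF xG ij] g_def by simp
  ultimately have "(g \<longlongrightarrow> Hfun a p x) (at x within Gamma adj a p h1)" by simp
  then have "(Hfun a p \<longlongrightarrow> Hfun a p x) (at x within Gamma adj a p h1)"
  proof (rule Lim_transform_within_openin)
    show "openin (top_of_set (Gamma adj a p h1)) (Gamma adj a p h1 \<inter> {y. y $ i $ j > 0})"
      by (intro openin_open_Int open_Collect_less continuous_intros)
    show "x \<in> Gamma adj a p h1 \<inter> {y. y $ i $ j > 0}" using xG ij by auto
    show "g y = Hfun a p y" if "y \<in> Gamma adj a p h1 \<inter> {y. y $ i $ j > 0}" for y
      using H_local[of y adj a p h1 i j] that ij g_def by auto
  qed
  then show "continuous (at x within Gamma adj a p h1) (Hfun a p)"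
    by (simp add: continuous_within)
qed

end
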